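(* Let $\mathcal{C}$ be a class of instances that is closed under homomorphic equivalence, and let $\mathcal{F}$ be a finite set of connected instances. Then $\mathcal{C}$ admits a left query algorithm over $\mathbb{N}$ of the form $(\mathcal{F},X)$ for some set $X$ if and only if $\mathcal{C}$ admits a left query algorithm over $\mathbb{B}$ of the form $(\mathcal{F},X')$ for some set $X'$.
   Context: A schema is a finite set of relation symbols, each with a positive arity. An instance $A$ over a schema $\sigma$ assigns to each $R\in\sigma$ of arity $r$ a finite $r$-ary relation $R^A$; its facts are the tuples in these relations, and $\mathrm{adom}(A)$ is the set of elements occurring in its facts. A homomorphism $h:A\to B$ is a map $h:\mathrm{adom}(A)\to\mathrm{adom}(B)$ preserving every relation; we write $A\to B$ if one exists. $A,B$ are homomorphically equivalent if $A\to B$ and $B\to A$. A class of instances is a collection of instances over a fixed schema closed under isomorphism; it is closed under homomorphic equivalence if $A\in\mathcal{C}$ and $A,B$ homomorphically equivalent imply $B\in\mathcal{C}$. $\hom_{\mathbb{N}}(A,B)$ is the number of homomorphisms $A\to B$; $\hom_{\mathbb{B}}(A,B)=1$ if $A\to B$ and $0$ otherwise. For $\mathcal{F}=\{F_1,\dots,F_k\}$, $\hom_K(\mathcal{F},A)=(\hom_K(F_i,A))_{i\le k}$. A left $k$-query algorithm over $K\in\{\mathbb{B},\mathbb{N}\}$ for $\mathcal{C}$ is a pair $(\mathcal{F},X)$ with $|\mathcal{F}|=k$ and $X$ a set of $k$-tuples over $K$ (no effectiveness required) such that for every instance $D$: $D\in\mathcal{C}$ iff $\hom_K(\mathcal{F},D)\in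 X$. An instance is connected if its incidence multigraph (bipartite, with parts $\mathrm{adom}(A)$ and the set of facts, an edge joining an element to a fact for each occurrence of the element in the fact) restricted to connectivity between elements is connected, i.e. any two elements of $\mathrm{adom}(A)$ are linked by a chain of facts consecutively sharing elements. *)

theory Defs
  imports Main "HOL-Library.FuncSet"
begin

definition schema :: "'r set \<Rightarrow> ('r \<Rightarrow> nat) \<Rightarrow> bool" where
  "schema S ar \<longleftrightarrow> finite S \<and> (\<forall>R\<in>S. ar R > 0)"

type_synonym ('r, 'a) inst = "'r \<Rightarrow> 'a list set"

definition is_instance :: "'r set \<Rightarrow> ('r \<Rightarrow> nat) \<Rightarrow> ('r, 'a) inst \<Rightarrow> bool" where
  "is_instance S ar A \<longleftrightarrow>
     (\<forall>R. R \<notin> S \<longrightarrow> A R = {}) \<and>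
     (\<forall>R\<in>S. finite (A R) \<and> (\<forall>t\<in>A R. length t = ar R))"

definition adom :: "('r, 'a) inst \<Rightarrow> 'a set" where
  "adom A = (\<Union>R. \<Union>t\<in>A R. set t)"

definition is_hom :: "('r, 'a) inst \<Rightarrow> ('r, 'a) inst \<Rightarrow> ('a \<Rightarrow> 'a) \<Rightarrow> bool" where
  "is_hom A B h \<longleftrightarrow> h \<in> adom A \<rightarrow> adom B \<and> (\<forall>R. \<forall>t\<in>A R. map h t \<in> B R)"

definition homs :: "('r, 'a) inst \<Rightarrow> ('r, 'a) inst \<Rightarrow> ('a \<Rightarrow> 'a) set" where
  "homs A B = {h \<in> adom A \<rightarrow>\<^sub>E adom B. \<forall>R. \<forall>t\<in>A R. map h t \<in> B R}"

definition hom_exists :: "('r, 'a) inst \<Rightarrow> ('r, 'a) inst \<Rightarrow> bool" where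
  "hom_exists A B \<longleftrightarrow> (\<exists>h. is_hom A B h)"

definition hom_N :: "('r, 'a) inst \<Rightarrow> ('r, 'a) inst \<Rightarrow> nat" where
  "hom_N A B = card (homs A B)"

definition hom_B :: "('r, 'a) inst \<Rightarrow> ('r, 'a) inst \<Rightarrow> bool" where
  "hom_B A B = hom_exists A B"

definition isomorphic :: "('r, 'a) inst \<Rightarrow> ('r, 'a) inst \<Rightarrow> bool" where
  "isomorphic A B \<longleftrightarrow>
     (\<exists>h. bij_betw h (adom A) (adom B) \<and> (\<forall>R. B R = map h ` A R))"

definition is_class :: "'r set \<Rightarrow> ('r \<Rightarrow> nat) \<Rightarrow> ('r, 'a) inst set \<Rightarrow> bool" where
  "is_class S ar C \<longleftrightarrow>
     (\<forall>A\<in>C. is_instance S ar A) \<and>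
     (\<forall>A B. A \<in> C \<longrightarrow> is_instance S ar B \<longrightarrow> isomorphic A B \<longrightarrow> B \<in> C)"

definition closed_hom_equiv :: "'r set \<Rightarrow> ('r \<Rightarrow> nat) \<Rightarrow> ('r, 'a) inst set \<Rightarrow> bool" where
  "closed_hom_equiv S ar C \<longleftrightarrow>
     (\<forall>A B. A \<in> C \<longrightarrow> is_instance S ar B \<longrightarrow> hom_exists A B \<longrightarrow> hom_exists B A \<longrightarrow> B \<in> C)"

definition adjacent :: "('r, 'a) inst \<Rightarrow> 'a \<Rightarrow> 'a \<Rightarrow> bool" where
  "adjacent A a b \<longleftrightarrow> (\<exists>R. \<exists>t\<in>A R. a \<in> set t \<and> b \<in> set t)"

definition connected_inst :: "('r, 'a) inst \<Rightarrow> bool" where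
  "connected_inst A \<longleftrightarrow> (\<forall>a\<in>adom A. \<forall>b\<in>adom A. (adjacent A)\<^sup>*\<^sup>* a b)"

text \<open>Left query algorithms (Fs, X): Fs is a list of distinct instances (the k-element set F,
  enumerated), X a set of k-tuples over K.\<close>
definition left_query_alg_N ::
  "'r set \<Rightarrow> ('r \<Rightarrow> nat) \<Rightarrow> ('r, 'a) inst set \<Rightarrow> ('r, 'a) inst list \<Rightarrow> nat list set \<Rightarrow> bool" where
  "left_query_alg_N S ar C Fs X \<longleftrightarrow>
     (\<forall>D. is_instance S ar D \<longrightarrow> (D \<in> C \<longleftrightarrow> map (\<lambda>F. hom_N F D) Fs \<in> X))"

definition left_query_alg_B ::
  "'r set \<Rightarrow> ('r \<Rightarrow> nat) \<Rightarrow> ('r, 'a) inst set \<Rightarrow> ('r, 'a) inst list \<Rightarrow> bool list set \<Rightarrow> bool" where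
  "left_query_alg_B S ar C Fs X \<longleftrightarrow>
     (\<forall>D. is_instance S ar D \<longrightarrow> (D \<in> C \<longleftrightarrow> map (\<lambda>F. hom_B F D) Fs \<in> X))"

end

theory Submission
  imports Defs "HOL-Computational_Algebra.Polynomial"
begin

definition homsG :: "('r, 'a) inst \<Rightarrow> ('r, 'b) inst \<Rightarrow> ('a \<Rightarrow> 'b) set" where
  "homsG A B = {h \<in> adom A \<rightarrow>\<^sub>E adom B. \<forall>R. \<forall>t\<in>A R. map h t \<in> B R}"

definition hexG :: "('r, 'a) inst \<Rightarrow> ('r, 'b) inst \<Rightarrow> bool" where
  "hexG A B \<longleftrightarrow> (\<exists>h. \<forall>R. \<forall>t\<in>A R. map h t \<in> B R)"

definition prodI :: "('r, 'b) inst list \<Rightarrow> ('r, 'b list) inst" where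
  "prodI L R = {t. (\<forall>e\<in>set t. length e = length L) \<and> (\<forall>i<length L. map (\<lambda>e. e!i) t \<in> (L!i) R)}"

definition sumI :: "('r, 'b) inst list \<Rightarrow> ('r, nat \<times> 'b) inst" where
  "sumI Ls R = (\<Union>i\<in>{..<length Ls}. map (Pair i) ` (Ls!i) R)"

definition copyI :: "('b \<Rightarrow> 'a) \<Rightarrow> ('r, 'b) inst \<Rightarrow> ('r, 'a) inst" where
  "copyI g A R = map g ` A R"

lemma homs_eq: "homs A B = homsG A B"
  unfolding homs_def homsG_def ..

lemma set_sub_adom: "t \<in> A R \<Longrightarrow> set t \<subseteq> adom A"
  unfolding adom_def by blast

lemma homsG_I:
  assumes "h \<in> extensional (adom A)" "\<And>R t. t \<in> A R \<Longrightarrow> map h t \<in> B R"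
  shows "h \<in> homsG A B"
proof -
  have "h \<in> adom A \<rightarrow> adom B"
  proof
    fix x assume "x \<in> adom A"
    then obtain R t where "t \<in> A R" "x \<in> set t" unfolding adom_def by blast
    then have "h x \<in> set (map h t)" "map h t \<in> B R" using assms(2) by auto
    then show "h x \<in> adom B" using set_sub_adom[of "map h t" B R] by blast
  qed
  then have "h \<in> adom A \<rightarrow>\<^sub>E adom B" unfolding PiE_def using assms(1) by blast
  then show ?thesis using assms(2) unfolding homsG_def by blast
qed

lemma homsG_D: "h \<in> homsG A B \<Longrightarrow> t \<in> A R \<Longrightarrow> map h t \<in> B R"
  unfolding homsG_def by auto

lemma homsG_ext: "h \<in> homsG A B \<Longrightarrow> h \<in> extensional (adom A)"
  unfolding homsG_def by (auto simp: PiE_iff)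

lemma hexG_iff: "hexG A B \<longleftrightarrow> homsG A B \<noteq> {}"
proof
  assume "hexG A B"
  then obtain h where h: "\<And>R t. t \<in> A R \<Longrightarrow> map h t \<in> B R" unfolding hexG_def by blast
  have "restrict h (adom A) \<in> homsG A B"
  proof (rule homsG_I)
    fix R t assume tA: "t \<in> A R"
    have eq: "map (restrict h (adom A)) t = map h t"
      using set_sub_adom[of t A R, OF tA] by (auto intro!: map_cong)
    show "map (restrict h (adom A)) t \<in> B R" unfolding eq using h[OF tA] .
  qed simp
  then show "homsG A B \<noteq> {}" by blast
next
  assume "homsG A B \<noteq> {}"
  then obtain h where h: "h \<in> homsG A B" by blast
  show "hexG A B" unfolding hexG_def by (intro exI[of _ h] allI ballI homsG_D[OF h])
qed

lemma hom_exists_eq: "hom_exists A B = hexG A B"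
proof
  assume "hom_exists A B" then show "hexG A B" unfolding hom_exists_def is_hom_def hexG_def by blast
next
  assume "hexG A B" then obtain h where h: "h \<in> homsG A B" using hexG_iff by blast
  then have "h \<in> adom A \<rightarrow> adom B" unfolding homsG_def by (auto simp: PiE_iff)
  then show "hom_exists A B" using homsG_D[OF h] unfolding hom_exists_def is_hom_def by blast
qed

lemma hexG_trans: "hexG A B \<Longrightarrow> hexG B C \<Longrightarrow> hexG A C"
proof -
  assume "hexG A B" "hexG B C"
  then obtain h1 h2 where h1: "\<And>R t. t \<in> A R \<Longrightarrow> map h1 t \<in> B R"
    and h2: "\<And>R t. t \<in> B R \<Longrightarrow> map h2 t \<in> C R" unfolding hexG_def by blast
  have "\<And>R t. t \<in> A R \<Longrightarrow> map (h2 \<circ> h1) t \<in> C R"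
    using h1 h2 by (metis map_map)
  then show ?thesis unfolding hexG_def by blast
qed

lemma inst_finite_adom:
  assumes "schema S ar" "is_instance S ar A" shows "finite (adom A)"
proof -
  have "adom A = (\<Union>R\<in>S. \<Union>t\<in>A R. set t)" using assms unfolding adom_def is_instance_def by auto
  moreover have "finite S" using assms(1) unfolding schema_def by simp
  moreover have "\<And>R. R \<in> S \<Longrightarrow> finite (A R)" using assms(2) unfolding is_instance_def by simp
  ultimately show ?thesis by simp
qed

lemma finite_homsG: "finite (adom A) \<Longrightarrow> finite (adom B) \<Longrightarrow> finite (homsG A B)"
  unfolding homsG_def by (rule finite_subset[OF _ finite_PiE[of "adom A" "\<lambda>_. adom B"]]) auto

lemma homsG_val: "h \<in> homsG A B \<Longrightarrow> x \<in> adom A \<Longrightarrow> h x \<in> adom B"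
  unfolding homsG_def by (auto simp: PiE_iff)

lemma adom_copyI: "adom (copyI g A) = g ` adom A"
  unfolding adom_def copyI_def by auto

lemma hexG_copy: "hexG A (copyI g A)"
  unfolding hexG_def copyI_def by (intro exI[of _ g]) auto

lemma hexG_copy_back:
  assumes inj: "inj_on g (adom A)" shows "hexG (copyI g A) A"
  unfolding hexG_def
proof (intro exI[of _ "inv_into (adom A) g"] allI ballI)
  fix R t' assume "t' \<in> copyI g A R"
  then obtain t where t: "t \<in> A R" "t' = map g t" unfolding copyI_def by blast
  have "map (inv_into (adom A) g) t' = map (inv_into (adom A) g \<circ> g) t" unfolding t(2) by simp
  also have "\<dots> = t" using set_sub_adom[of t A R, OF t(1)] inj
    by (intro map_idI) (auto simp: inv_into_f_f)
  finally show "map (inv_into (adom A) g) t' \<in> A R" using t(1) by simp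
qed

lemma hexG_prod_single: "hexG D (prodI [D])"
  unfolding hexG_def prodI_def by (intro exI[of _ "\<lambda>x. [x]"]) (auto simp: comp_def)

lemma hexG_proj: "i < length L \<Longrightarrow> hexG (prodI L) (L!i)"
  unfolding hexG_def prodI_def by (intro exI[of _ "\<lambda>e. e!i"]) auto

lemma hexG_inj: assumes "B \<in> set Ls" shows "hexG B (sumI Ls)"
proof -
  obtain i where i: "i < length Ls" "Ls!i = B" using assms by (auto simp: in_set_conv_nth)
  show ?thesis unfolding hexG_def sumI_def
    by (intro exI[of _ "Pair i"] allI ballI UN_I[of i]) (use i in auto)
qed

lemma hexG_sum: assumes "\<forall>B\<in>set Ls. hexG B C" shows "hexG (sumI Ls) C"
proof -
  have "\<forall>i. \<exists>h. i < length Ls \<longrightarrow> (\<forall>R. \<forall>t\<in>(Ls!i) R. map h t \<in> C R)"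
    using assms unfolding hexG_def by (metis nth_mem)
  from choice[OF this] obtain hs where hs: "\<And>i R t. i < length Ls \<Longrightarrow> t \<in> (Ls!i) R \<Longrightarrow> map (hs i) t \<in> C R"
    by blast
  show ?thesis unfolding hexG_def
  proof (intro exI[of _ "\<lambda>p. hs (fst p) (snd p)"] allI ballI)
    fix R t assume "t \<in> sumI Ls R"
    then obtain i s where "i < length Ls" "s \<in> (Ls!i) R" "t = map (Pair i) s" unfolding sumI_def by blast
    then show "map (\<lambda>p. hs (fst p) (snd p)) t \<in> C R" using hs by (simp add: comp_def)
  qed
qed

lemma inst_copyI: "is_instance S ar A \<Longrightarrow> is_instance S ar (copyI g A)"
  unfolding is_instance_def copyI_def by auto

lemma inst_sumI: assumes "\<forall>B\<in>set Ls. is_instance S ar B" shows "is_instance S ar (sumI Ls)"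
proof -
  have I: "\<And>i. i<length Ls \<Longrightarrow> is_instance S ar (Ls!i)" using assms by simp
  show ?thesis unfolding is_instance_def
  proof (intro conjI allI impI ballI)
    fix R assume "R \<notin> S" then show "sumI Ls R = {}" using I unfolding is_instance_def sumI_def by auto
  next
    fix R assume "R \<in> S"
    then show "finite (sumI Ls R)" using I unfolding is_instance_def sumI_def by auto
    fix t assume "t \<in> sumI Ls R" then show "length t = ar R" using I \<open>R \<in> S\<close>
      unfolding is_instance_def sumI_def by auto
  qed
qed

lemma inst_prodI:
  assumes sch: "schema S ar" and ne: "L \<noteq> []" and insts: "\<forall>B\<in>set L. is_instance S ar B"
  shows "is_instance S ar (prodI L)"
proof -
  have I: "\<And>i. i<length L \<Longrightarrow> is_instance S ar (L!i)" using insts by simp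
  have L0: "0 < length L" using ne by simp
  define U where "U = (\<Union>i\<in>{..<length L}. adom (L!i))"
  have fU: "finite U" unfolding U_def using I inst_finite_adom[OF sch] by blast
  show ?thesis unfolding is_instance_def
  proof (intro conjI allI impI ballI)
    fix R assume "R \<notin> S"
    then have "(L!0) R = {}" using I[OF L0] unfolding is_instance_def by blast
    then show "prodI L R = {}" using L0 unfolding prodI_def by blast
  next
    fix R assume R: "R \<in> S"
    have len: "length t = ar R" if "t \<in> prodI L R" for t
    proof -
      have "map (\<lambda>e. e!0) t \<in> (L!0) R" using that L0 unfolding prodI_def by blast
      then show ?thesis using I[OF L0] R unfolding is_instance_def by fastforce
    qed
    have "prodI L R \<subseteq> {t. set t \<subseteq> {e. set e \<subseteq> U \<and> length e = length L} \<and> length t = ar R}"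
    proof
      fix t assume t: "t \<in> prodI L R"
      have "set e \<subseteq> U \<and> length e = length L" if e: "e \<in> set t" for e
      proof -
        have le: "length e = length L" using t e unfolding prodI_def by blast
        have "e!i \<in> U" if i: "i < length e" for i
        proof -
          have "map (\<lambda>e. e!i) t \<in> (L!i) R" using t i le unfolding prodI_def by auto
          then have "set (map (\<lambda>e. e!i) t) \<subseteq> adom (L!i)" by (rule set_sub_adom)
          then show ?thesis using e i le unfolding U_def by auto
        qed
        then show ?thesis using le by (auto simp: in_set_conv_nth)
      qed
      then show "t \<in> {t. set t \<subseteq> {e. set e \<subseteq> U \<and> length e = length L} \<and> length t = ar R}"
        using len[OF t] by blast
    qed
    moreover have "finite {e. set e \<subseteq> U \<and> length e = length L}" using fU by (rule finite_lists_length_eq)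
    ultimately show "finite (prodI L R)" by (rule finite_subset[OF _ finite_lists_length_eq])
    fix t assume "t \<in> prodI L R" then show "length t = ar R" by (rule len)
  qed
qed

lemma inj_into_infinite:
  assumes "finite A" "infinite (UNIV :: 'a set)" shows "\<exists>g :: 'b \<Rightarrow> 'a. inj_on g A"
proof -
  obtain f :: "'b \<Rightarrow> nat" and n where f: "f ` A = {i. i<n}" "inj_on f A"
    using finite_imp_inj_to_nat_seg[OF assms(1)] by metis
  from assms(2) obtain F :: "nat \<Rightarrow> 'a" where F: "inj F" "range F \<subseteq> UNIV"
    unfolding infinite_iff_countable_subset by metis
  have "inj_on (F \<circ> f) A" using comp_inj_on[OF f(2) inj_on_subset[OF F(1) subset_UNIV]] .
  then show ?thesis by blast
qed

lemma card_homsG_copy: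
  assumes inj: "inj_on g (adom A)"
  shows "card (homsG F (copyI g A)) = card (homsG F A)"
proof -
  define \<phi> where "\<phi> h = restrict (g \<circ> h) (adom F)" for h
  have mapphi: "map (\<phi> h) t = map g (map h t)" if "t \<in> F R" for h t R
    using set_sub_adom[of t F R, OF that] unfolding \<phi>_def by (auto intro!: map_cong)
  have into: "\<phi> h \<in> homsG F (copyI g A)" if h: "h \<in> homsG F A" for h
  proof (rule homsG_I)
    show "\<phi> h \<in> extensional (adom F)" unfolding \<phi>_def by simp
    fix R t assume t: "t \<in> F R"
    show "map (\<phi> h) t \<in> copyI g A R" unfolding mapphi[OF t] copyI_def using homsG_D[OF h t] by blast
  qed
  have inj\<phi>: "inj_on \<phi> (homsG F A)"
  proof (rule inj_onI)
    fix h1 h2 assume h1: "h1 \<in> homsG F A" and h2: "h2 \<in> homsG F A" and eq: "\<phi> h1 = \<phi> h2"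
    show "h1 = h2"
    proof (rule extensionalityI[OF homsG_ext[OF h1] homsG_ext[OF h2]])
      fix x assume x: "x \<in> adom F"
      have "g (h1 x) = g (h2 x)" using fun_cong[OF eq, of x] x unfolding \<phi>_def by simp
      then show "h1 x = h2 x" using inj homsG_val[OF h1 x] homsG_val[OF h2 x] by (auto dest: inj_onD)
    qed
  qed
  have onto: "homsG F (copyI g A) \<subseteq> \<phi> ` homsG F A"
  proof
    fix h' assume h': "h' \<in> homsG F (copyI g A)"
    define h where "h = restrict (inv_into (adom A) g \<circ> h') (adom F)"
    have "h \<in> homsG F A"
    proof (rule homsG_I)
      show "h \<in> extensional (adom F)" unfolding h_def by simp
      fix R t assume t: "t \<in> F R"
      obtain s where s: "s \<in> A R" "map h' t = map g s" using homsG_D[OF h' t] unfolding copyI_def by blast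
      have "map h t = map (inv_into (adom A) g) (map h' t)"
        using set_sub_adom[of t F R, OF t] unfolding h_def by (auto intro!: map_cong)
      also have "\<dots> = map (inv_into (adom A) g \<circ> g) s" unfolding s(2) by simp
      also have "\<dots> = s" using set_sub_adom[of s A R, OF s(1)] inj
        by (intro map_idI) (auto simp: inv_into_f_f)
      finally show "map h t \<in> A R" using s(1) by simp
    qed
    moreover have "\<phi> h = h'"
    proof (rule extensionalityI[OF _ homsG_ext[OF h']])
      show "\<phi> h \<in> extensional (adom F)" unfolding \<phi>_def by simp
      fix x assume x: "x \<in> adom F"
      have "h' x \<in> g ` adom A" using homsG_val[OF h' x] unfolding adom_copyI .
      then show "\<phi> h x = h' x" using x unfolding \<phi>_def h_def by (simp add: f_inv_into_f)
    qed
    ultimately show "h' \<in> \<phi> ` homsG F A" by blast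
  qed
  have "\<phi> ` homsG F A = homsG F (copyI g A)" using into onto by blast
  then show ?thesis using card_image[OF inj\<phi>] by simp
qed

lemma adom_prodI_len: "e \<in> adom (prodI L) \<Longrightarrow> length e = length L"
  unfolding adom_def prodI_def by auto

lemma card_homsG_prodI:
  fixes F :: "('r, 'a) inst" and L :: "('r, 'b) inst list"
  shows "card (homsG F (prodI L)) = prod_list (map (\<lambda>B. card (homsG F B)) L)"
proof -
  define n where "n = length L"
  define \<psi> where "\<psi> h = (\<lambda>i\<in>{..<n}. restrict (\<lambda>x. h x ! i) (adom F))" for h :: "'a \<Rightarrow> 'b list"
  have into: "\<psi> h \<in> (\<Pi>\<^sub>E i\<in>{..<n}. homsG F (L!i))" if h: "h \<in> homsG F (prodI L)" for h
  proof -
    have "restrict (\<lambda>x. h x ! i) (adom F) \<in> homsG F (L!i)" if i: "i < n" for i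
    proof (rule homsG_I)
      fix R t assume t: "t \<in> F R"
      have eq: "map (restrict (\<lambda>x. h x ! i) (adom F)) t = map (\<lambda>e. e!i) (map h t)"
        using set_sub_adom[of t F R, OF t] by (auto intro!: map_cong)
      have m: "map (\<lambda>e. e!i) (map h t) \<in> (L!i) R"
        using homsG_D[OF h t] i unfolding prodI_def n_def by blast
      show "map (restrict (\<lambda>x. h x ! i) (adom F)) t \<in> (L!i) R" unfolding eq by (rule m)
    qed simp
    then show ?thesis unfolding \<psi>_def by (simp add: PiE_iff)
  qed
  have inj: "inj_on \<psi> (homsG F (prodI L))"
  proof (rule inj_onI)
    fix h1 h2 assume h1: "h1 \<in> homsG F (prodI L)" and h2: "h2 \<in> homsG F (prodI L)" and eq: "\<psi> h1 = \<psi> h2"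
    show "h1 = h2"
    proof (rule extensionalityI[OF homsG_ext[OF h1] homsG_ext[OF h2]])
      fix x assume x: "x \<in> adom F"
      have l1: "length (h1 x) = n" using adom_prodI_len[OF homsG_val[OF h1 x]] n_def by simp
      have l2: "length (h2 x) = n" using adom_prodI_len[OF homsG_val[OF h2 x]] n_def by simp
      have "h1 x ! i = h2 x ! i" if i: "i < n" for i
        using fun_cong[OF fun_cong[OF eq, of i], of x] i x unfolding \<psi>_def by simp
      then show "h1 x = h2 x" using l1 l2 by (intro nth_equalityI) auto
    qed
  qed
  have onto: "(\<Pi>\<^sub>E i\<in>{..<n}. homsG F (L!i)) \<subseteq> \<psi> ` homsG F (prodI L)"
  proof
    fix hs assume hs: "hs \<in> (\<Pi>\<^sub>E i\<in>{..<n}. homsG F (L!i))"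
    have hsi: "hs i \<in> homsG F (L!i)" if "i < n" for i using hs that by (auto simp: PiE_iff)
    define h where "h = restrict (\<lambda>x. map (\<lambda>i. hs i x) [0..<n]) (adom F)"
    have hh: "h \<in> homsG F (prodI L)"
    proof (rule homsG_I)
      show "h \<in> extensional (adom F)" unfolding h_def by simp
      fix R t assume t: "t \<in> F R"
      have mt: "map h t = map (\<lambda>x. map (\<lambda>i. hs i x) [0..<n]) t"
        using set_sub_adom[of t F R, OF t] unfolding h_def by (auto intro!: map_cong)
      have "map (\<lambda>e. e!i) (map h t) \<in> (L!i) R" if i: "i < n" for i
      proof -
        have eq: "map (\<lambda>e. e!i) (map h t) = map (hs i) t" unfolding mt using i by simp
        show ?thesis unfolding eq by (rule homsG_D[OF hsi[OF i] t])
      qed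
      then show "map h t \<in> prodI L R" unfolding prodI_def n_def[symmetric] mt by auto
    qed
    moreover have "\<psi> h = hs"
    proof (rule extensionalityI[of _ "{..<n}"])
      show "\<psi> h \<in> extensional {..<n}" unfolding \<psi>_def by simp
      show "hs \<in> extensional {..<n}" using hs by (simp add: PiE_iff)
      fix i assume i: "i \<in> {..<n}"
      have "\<psi> h i = restrict (hs i) (adom F)" unfolding \<psi>_def h_def using i by (auto intro!: restrict_ext)
      also have "\<dots> = hs i" using homsG_ext[OF hsi] i by (simp add: extensional_restrict)
      finally show "\<psi> h i = hs i" .
    qed
    ultimately show "hs \<in> \<psi> ` homsG F (prodI L)" by blast
  qed
  have "\<psi> ` homsG F (prodI L) = (\<Pi>\<^sub>E i\<in>{..<n}. homsG F (L!i))" using into onto by blast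
  then have "card (homsG F (prodI L)) = card (\<Pi>\<^sub>E i\<in>{..<n}. homsG F (L!i))"
    using card_image[OF inj] by simp
  also have "\<dots> = (\<Prod>i\<in>{..<n}. card (homsG F (L!i)))" by (simp add: card_PiE)
  also have "\<dots> = prod_list (map (\<lambda>B. card (homsG F B)) L)"
    by (simp add: prod.list_conv_set_nth n_def atLeast0LessThan)
  finally show ?thesis .
qed

lemma fst_in_map_pair: "map h t = map (Pair j) s \<Longrightarrow> a \<in> set t \<Longrightarrow> fst (h a) = j"
proof -
  assume eq: "map h t = map (Pair j) s" and a: "a \<in> set t"
  have "h a \<in> set (map (Pair j) s)" using a unfolding eq[symmetric] by simp
  then show ?thesis by auto
qed

lemma card_homsG_sumI:
  fixes F :: "('r, 'a) inst" and Ls :: "('r, 'b) inst list"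
  assumes conn: "connected_inst F" and ne: "adom F \<noteq> {}" and nf: "\<forall>R. \<forall>t\<in>F R. t \<noteq> []"
    and finF: "finite (adom F)" and finL: "\<forall>B\<in>set Ls. finite (adom B)"
  shows "card (homsG F (sumI Ls)) = sum_list (map (\<lambda>B. card (homsG F B)) Ls)"
proof -
  define n where "n = length Ls"
  define \<Phi> where "\<Phi> p = restrict (\<lambda>x. (fst p, snd p x)) (adom F)" for p :: "nat \<times> ('a \<Rightarrow> 'b)"
  obtain x0 where x0: "x0 \<in> adom F" using ne by blast
  have into: "\<Phi> p \<in> homsG F (sumI Ls)" if p: "p \<in> (SIGMA i:{..<n}. homsG F (Ls!i))" for p
  proof (rule homsG_I)
    show "\<Phi> p \<in> extensional (adom F)" unfolding \<Phi>_def by simp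
    fix R t assume t: "t \<in> F R"
    have eq: "map (\<Phi> p) t = map (Pair (fst p)) (map (snd p) t)"
      using set_sub_adom[of t F R, OF t] unfolding \<Phi>_def by (auto intro!: map_cong)
    have m: "map (snd p) t \<in> (Ls!fst p) R" using p homsG_D[of "snd p" F "Ls!fst p" t R] t by auto
    have fp: "fst p \<in> {..<length Ls}" using p by (auto simp: n_def)
    show "map (\<Phi> p) t \<in> sumI Ls R" unfolding sumI_def eq
      by (rule UN_I[OF fp]) (rule imageI[OF m])
  qed
  have inj: "inj_on \<Phi> (SIGMA i:{..<n}. homsG F (Ls!i))"
  proof (rule inj_onI)
    fix p1 p2 assume p1: "p1 \<in> (SIGMA i:{..<n}. homsG F (Ls!i))" and p2: "p2 \<in> (SIGMA i:{..<n}. homsG F (Ls!i))"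
      and eq: "\<Phi> p1 = \<Phi> p2"
    have e: "(fst p1, snd p1 x) = (fst p2, snd p2 x)" if "x \<in> adom F" for x
      using fun_cong[OF eq, of x] that unfolding \<Phi>_def by simp
    have "fst p1 = fst p2" using e[OF x0] by simp
    moreover have "snd p1 = snd p2"
      using p1 p2 e by (intro extensionalityI[of _ "adom F"]) (auto dest: homsG_ext)
    ultimately show "p1 = p2" by (simp add: prod_eq_iff)
  qed
  have onto: "homsG F (sumI Ls) \<subseteq> \<Phi> ` (SIGMA i:{..<n}. homsG F (Ls!i))"
  proof
    fix h assume h: "h \<in> homsG F (sumI Ls)"
    have dec: "\<exists>j s. j < n \<and> s \<in> (Ls!j) R \<and> map h t = map (Pair j) s" if t: "t \<in> F R" for t R
      using homsG_D[OF h t] unfolding sumI_def n_def by blast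
    define i where "i = fst (h x0)"
    have adjstep: "fst (h a) = fst (h b)" if adj: "adjacent F a b" for a b
    proof -
      obtain R t where t: "t \<in> F R" "a \<in> set t" "b \<in> set t" using adj unfolding adjacent_def by blast
      obtain j s where "map h t = map (Pair j) s" using dec[OF t(1)] by blast
      then show ?thesis using fst_in_map_pair t by metis
    qed
    have key: "fst (h x) = i" if x: "x \<in> adom F" for x
    proof -
      have "(adjacent F)\<^sup>*\<^sup>* x0 x" using conn x0 x unfolding connected_inst_def by blast
      then show ?thesis
      proof (induction rule: rtranclp_induct)
        case base then show ?case unfolding i_def ..
      next
        case (step y z) then show ?case using adjstep[of y z] by simp
      qed
    qed
    have i_lt: "i < n"
    proof -
      obtain R t where t: "t \<in> F R" "x0 \<in> set t" using x0 unfolding adom_def by blast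
      obtain j s where js: "j < n" "map h t = map (Pair j) s" using dec[OF t(1)] by blast
      have "fst (h x0) = j" using fst_in_map_pair[OF js(2) t(2)] .
      then show ?thesis using js(1) unfolding i_def by simp
    qed
    define h' where "h' = restrict (snd \<circ> h) (adom F)"
    have h': "h' \<in> homsG F (Ls!i)"
    proof (rule homsG_I)
      show "h' \<in> extensional (adom F)" unfolding h'_def by simp
      fix R t assume t: "t \<in> F R"
      obtain j s where js: "j < n" "s \<in> (Ls!j) R" "map h t = map (Pair j) s" using dec[OF t] by blast
      obtain a where a: "a \<in> set t" using nf t by (cases t) auto
      have "j = i" using fst_in_map_pair[OF js(3) a] key set_sub_adom[of t F R, OF t] a by auto
      have "map h' t = map snd (map h t)"
        using set_sub_adom[of t F R, OF t] unfolding h'_def by (auto intro!: map_cong)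
      also have "\<dots> = s" unfolding js(3) by (simp add: comp_def)
      finally show "map h' t \<in> (Ls!i) R" using js(2) \<open>j = i\<close> by simp
    qed
    have "\<Phi> (i, h') = h"
    proof (rule extensionalityI[OF _ homsG_ext[OF h]])
      show "\<Phi> (i, h') \<in> extensional (adom F)" unfolding \<Phi>_def by simp
      fix x assume x: "x \<in> adom F"
      show "\<Phi> (i, h') x = h x" using x key[OF x] unfolding \<Phi>_def h'_def by (simp add: prod_eq_iff)
    qed
    moreover have "(i, h') \<in> (SIGMA i:{..<n}. homsG F (Ls!i))" using i_lt h' by simp
    ultimately show "h \<in> \<Phi> ` (SIGMA i:{..<n}. homsG F (Ls!i))" by (metis image_eqI)
  qed
  have "\<Phi> ` (SIGMA i:{..<n}. homsG F (Ls!i)) = homsG F (sumI Ls)" using into onto by blast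
  then have "card (homsG F (sumI Ls)) = card (SIGMA i:{..<n}. homsG F (Ls!i))"
    using card_image[OF inj] by simp
  also have "\<dots> = (\<Sum>i\<in>{..<n}. card (homsG F (Ls!i)))"
    using finL finF by (intro card_SigmaI) (auto intro!: finite_homsG simp: n_def)
  also have "\<dots> = sum_list (map (\<lambda>B. card (homsG F B)) Ls)"
    by (simp add: sum.list_conv_set_nth n_def atLeast0LessThan)
  finally show ?thesis .
qed

lemma card_homsG_nofacts:
  assumes "\<forall>R. F R = {}" shows "card (homsG F B) = 1"
proof -
  have "adom F = {}" using assms unfolding adom_def by simp
  then have "homsG F B = {\<lambda>x. undefined}" unfolding homsG_def using assms by auto
  then show ?thesis by simp
qed

lemma poly_exists:
  fixes V :: "int set" assumes fin: "finite V" and pos: "\<forall>v\<in>V. v > 0"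
  shows "\<exists>p::int poly. coeff p 0 > 0 \<and> (\<forall>v\<in>V. poly p v = 0)"
proof -
  define p where "p = (\<Prod>v\<in>V. [:-v, 1:] ^ 2)"
  have pv: "poly p x = (\<Prod>v\<in>V. (x - v) ^ 2)" for x unfolding p_def poly_prod by simp
  have "coeff p 0 = (\<Prod>v\<in>V. (0 - v) ^ 2)" unfolding poly_0_coeff_0[symmetric] pv ..
  also have "\<dots> > 0" using pos by (intro prod_pos) auto
  finally have "coeff p 0 > 0" .
  moreover have "poly p v = 0" if v: "v \<in> V" for v
    unfolding pv using fin v by (subst prod_zero_iff) auto
  ultimately show ?thesis by blast
qed

lemma sum_list_structure:
  "sum_list (map f (B0 # concat (map (\<lambda>a. replicate (k a) (cp a)) [0..<m])))
     = f B0 + (\<Sum>a<m. k a * f (cp a))"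
  by (induct m) (simp_all add: sum_list_replicate)

lemma hom_B_card:
  assumes "finite (adom F)" "finite (adom D)"
  shows "hom_B F D \<longleftrightarrow> 0 < card (homsG F D)"
  unfolding hom_B_def hom_exists_eq hexG_iff using finite_homsG[OF assms] by (simp add: card_gt_0_iff)

lemma hom_N_card: "hom_N F D = card (homsG F D)"
  unfolding hom_N_def homs_eq ..

lemma card_comp:
  "card (homsG F (prodI (replicate a D1 @ [D2]))) = card (homsG F D1) ^ a * card (homsG F D2)"
  unfolding card_homsG_prodI by simp

lemma card_single: "card (homsG F (prodI [D1])) = card (homsG F D1)"
  unfolding card_homsG_prodI by simp

lemma nonempty_facts:
  assumes "schema S ar" "is_instance S ar F" shows "\<forall>R. \<forall>t\<in>F R. t \<noteq> []"
proof (intro allI ballI)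
  fix R t assume t: "t \<in> F R"
  then have "R \<in> S" using assms(2) unfolding is_instance_def by auto
  then have "length t = ar R" "ar R > 0" using assms t unfolding is_instance_def schema_def by auto
  then show "t \<noteq> []" by auto
qed

lemma che_iff:
  assumes "closed_hom_equiv S ar C" "is_instance S ar A" "is_instance S ar B" "hexG A B" "hexG B A"
  shows "A \<in> C \<longleftrightarrow> B \<in> C"
proof
  assume "A \<in> C" then show "B \<in> C" using assms unfolding closed_hom_equiv_def hom_exists_eq by blast
next
  assume "B \<in> C" then show "A \<in> C" using assms unfolding closed_hom_equiv_def hom_exists_eq by blast
qed

lemma half:
  fixes D1 D2 W :: "('r, 'a) inst" and C :: "('r, 'a) inst set" and Fs :: "('r, 'a) inst list"
  assumes inf: "infinite (UNIV :: 'a set)" and sch: "schema S ar"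
    and che: "closed_hom_equiv S ar C" and alg: "left_query_alg_N S ar C Fs X"
    and Fs: "\<forall>F\<in>set Fs. is_instance S ar F \<and> connected_inst F"
    and D1: "is_instance S ar D1" and D2: "is_instance S ar D2"
    and supp: "\<forall>F\<in>set Fs. hom_B F D1 = hom_B F D2"
    and W: "is_instance S ar W" and WZ: "hexG W (sumI [prodI [D1], prodI [D2]])"
    and ZW: "hexG (sumI [prodI [D1], prodI [D2]]) W"
  shows "D1 \<in> C \<longleftrightarrow> W \<in> C"
proof -
  define x where "x F = card (homsG F D1)" for F :: "('r, 'a) inst"
  define y where "y F = card (homsG F D2)" for F :: "('r, 'a) inst"
  define V where "V = (\<lambda>F. int (x F)) ` {F \<in> set Fs. 0 < x F}"
  have "finite V" "\<forall>v\<in>V. v > 0" unfolding V_def by auto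
  from poly_exists[OF this] obtain p :: "int poly" where
    p0: "coeff p 0 > 0" and proot: "\<forall>v\<in>V. poly p v = 0" by blast
  define n where "n = degree p"
  define c where "c a = coeff p a" for a
  define cp where "cp a = prodI (replicate a D1 @ [D2])" for a
  define E1s where "E1s = prodI [D1] # concat (map (\<lambda>a. replicate (nat (- c a)) (cp a)) [0..<Suc n])"
  define E2s where "E2s = prodI [D1] # concat (map (\<lambda>a. replicate (nat (c a)) (cp a)) [0..<Suc n])"
  have fD1: "finite (adom D1)" and fD2: "finite (adom D2)" using D1 D2 sch inst_finite_adom by blast+
  have inst_cp: "is_instance S ar (cp a)" for a
    unfolding cp_def using D1 D2 by (intro inst_prodI[OF sch]) auto
  have inst_s: "is_instance S ar (prodI [D1])" using D1 by (intro inst_prodI[OF sch]) auto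
  have set_E1: "B = prodI [D1] \<or> (\<exists>a. 0 < nat (- c a) \<and> B = cp a)" if "B \<in> set E1s" for B
  proof -
    from that have "B = prodI [D1] \<or> (\<exists>a\<in>set [0..<Suc n]. B \<in> set (replicate (nat (- c a)) (cp a)))"
      unfolding E1s_def by auto
    then show ?thesis by (metis in_set_replicate length_pos_if_in_set length_replicate)
  qed
  have set_E2: "B = prodI [D1] \<or> (\<exists>a. B = cp a)" if "B \<in> set E2s" for B
  proof -
    from that have "B = prodI [D1] \<or> (\<exists>a\<in>set [0..<Suc n]. B \<in> set (replicate (nat (c a)) (cp a)))"
      unfolding E2s_def by auto
    then show ?thesis by (metis in_set_replicate length_pos_if_in_set length_replicate)
  qed
  have c0: "0 < nat (c 0)" using p0 unfolding c_def by simp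
  have cp0_E2: "cp 0 \<in> set E2s" unfolding E2s_def using c0 by force
  have s_E1: "prodI [D1] \<in> set E1s" and s_E2: "prodI [D1] \<in> set E2s"
    unfolding E1s_def E2s_def by simp_all
  have I1: "is_instance S ar (sumI E1s)" using set_E1 inst_cp inst_s by (intro inst_sumI) metis
  have I2: "is_instance S ar (sumI E2s)" using set_E2 inst_cp inst_s by (intro inst_sumI) metis
  obtain g1 :: "nat \<times> 'a list \<Rightarrow> 'a" where g1: "inj_on g1 (adom (sumI E1s))"
    using inj_into_infinite[OF inst_finite_adom[OF sch I1] inf] by blast
  obtain g2 :: "nat \<times> 'a list \<Rightarrow> 'a" where g2: "inj_on g2 (adom (sumI E2s))"
    using inj_into_infinite[OF inst_finite_adom[OF sch I2] inf] by blast
  define W1 where "W1 = copyI g1 (sumI E1s)"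
  define W2 where "W2 = copyI g2 (sumI E2s)"
  have IW1: "is_instance S ar W1" unfolding W1_def by (rule inst_copyI[OF I1])
  have IW2: "is_instance S ar W2" unfolding W2_def by (rule inst_copyI[OF I2])
  have "hexG D1 W1"
    unfolding W1_def
    by (rule hexG_trans[OF hexG_trans[OF hexG_prod_single hexG_inj[OF s_E1]] hexG_copy])
  moreover have "hexG W1 D1"
  proof -
    have "hexG B D1" if B: "B \<in> set E1s" for B
    proof (cases "B = prodI [D1]")
      case True then show ?thesis using hexG_proj[of 0 "[D1]"] by simp
    next
      case False
      then obtain a where a: "0 < nat (- c a)" "B = cp a" using set_E1[OF B] by blast
      have "a \<noteq> 0"
      proof
        assume "a = 0" then show False using a(1) c0 by simp
      qed
      then have "(replicate a D1 @ [D2]) ! 0 = D1" by (simp add: nth_append)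
      then show ?thesis using hexG_proj[of 0 "replicate a D1 @ [D2]"] a unfolding cp_def by simp
    qed
    then show ?thesis unfolding W1_def
      by (intro hexG_trans[OF hexG_copy_back[OF g1] hexG_sum]) blast
  qed
  ultimately have eq1: "D1 \<in> C \<longleftrightarrow> W1 \<in> C"
    by (rule che_iff[OF che D1 IW1])
  define Z where "Z = sumI [prodI [D1], prodI [D2]]"
  have ZG2: "hexG Z (sumI E2s)"
  proof -
    have "hexG B (sumI E2s)" if "B \<in> set [prodI [D1], prodI [D2]]" for B
    proof -
      have "B \<in> set E2s" using that s_E2 cp0_E2 unfolding cp_def by auto
      then show ?thesis by (rule hexG_inj)
    qed
    then show ?thesis unfolding Z_def by (intro hexG_sum) blast
  qed
  have G2Z: "hexG (sumI E2s) Z"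
  proof -
    have "hexG B Z" if B: "B \<in> set E2s" for B
    proof (cases "B = prodI [D1]")
      case True then show ?thesis unfolding Z_def by (intro hexG_inj) simp
    next
      case False
      then obtain a where a: "B = cp a" using set_E2[OF B] by blast
      have "(replicate a D1 @ [D2]) ! a = D2" by (simp add: nth_append)
      then have "hexG B D2" using hexG_proj[of a "replicate a D1 @ [D2]"] a unfolding cp_def by simp
      moreover have "hexG (prodI [D2]) Z" unfolding Z_def by (intro hexG_inj) simp
      ultimately show ?thesis using hexG_trans[OF hexG_trans[OF _ hexG_prod_single]] by blast
    qed
    then show ?thesis by (intro hexG_sum) blast
  qed
  have "hexG W W2" unfolding W2_def
    using hexG_trans[OF hexG_trans[OF WZ[folded Z_def] ZG2] hexG_copy] .
  moreover have "hexG W2 W" unfolding W2_def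
    using hexG_trans[OF hexG_trans[OF hexG_copy_back[OF g2] G2Z] ZW[folded Z_def]] .
  ultimately have eq2: "W \<in> C \<longleftrightarrow> W2 \<in> C"
    by (rule che_iff[OF che W IW2])
  have cnteq: "hom_N F W1 = hom_N F W2" if F: "F \<in> set Fs" for F
  proof -
    have IF: "is_instance S ar F" and cF: "connected_inst F" using Fs F by auto
    have fF: "finite (adom F)" using inst_finite_adom[OF sch IF] .
    have h1: "hom_N F W1 = card (homsG F (sumI E1s))"
      unfolding hom_N_card W1_def using card_homsG_copy[OF g1] .
    have h2: "hom_N F W2 = card (homsG F (sumI E2s))"
      unfolding hom_N_card W2_def using card_homsG_copy[OF g2] .
    show ?thesis
    proof (cases "\<forall>R. F R = {}")
      case True then show ?thesis unfolding h1 h2 using card_homsG_nofacts by metis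
    next
      case False
      then obtain R t where t: "t \<in> F R" by blast
      have nf: "\<forall>R. \<forall>t\<in>F R. t \<noteq> []" by (rule nonempty_facts[OF sch IF])
      have ne: "adom F \<noteq> {}" using t nf set_sub_adom[of t F R, OF t] by (cases t) auto
      have fin_cp: "finite (adom (cp a))" for a using inst_finite_adom[OF sch inst_cp] .
      have fin_s: "finite (adom (prodI [D1]))" using inst_finite_adom[OF sch inst_s] .
      have fin1: "\<forall>B\<in>set E1s. finite (adom B)" using set_E1 fin_cp fin_s by metis
      have fin2: "\<forall>B\<in>set E2s. finite (adom B)" using set_E2 fin_cp fin_s by metis
      have ccp: "card (homsG F (cp a)) = x F ^ a * y F" for a
        unfolding cp_def x_def y_def by (rule card_comp)
      have S1: "card (homsG F (sumI E1s)) = x F + (\<Sum>a<Suc n. nat (- c a) * (x F ^ a * y F))"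
      proof -
        have "card (homsG F (sumI E1s)) = sum_list (map (\<lambda>B. card (homsG F B)) E1s)"
          by (rule card_homsG_sumI[OF cF ne nf fF fin1])
        also have "\<dots> = card (homsG F (prodI [D1])) + (\<Sum>a<Suc n. nat (- c a) * card (homsG F (cp a)))"
          unfolding E1s_def by (rule sum_list_structure)
        finally show ?thesis unfolding card_single ccp x_def .
      qed
      have S2: "card (homsG F (sumI E2s)) = x F + (\<Sum>a<Suc n. nat (c a) * (x F ^ a * y F))"
      proof -
        have "card (homsG F (sumI E2s)) = sum_list (map (\<lambda>B. card (homsG F B)) E2s)"
          by (rule card_homsG_sumI[OF cF ne nf fF fin2])
        also have "\<dots> = card (homsG F (prodI [D1])) + (\<Sum>a<Suc n. nat (c a) * card (homsG F (cp a)))"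
          unfolding E2s_def by (rule sum_list_structure)
        finally show ?thesis unfolding card_single ccp x_def .
      qed
      have "(\<Sum>a<Suc n. nat (- c a) * (x F ^ a * y F)) = (\<Sum>a<Suc n. nat (c a) * (x F ^ a * y F))"
      proof (cases "y F = 0")
        case True then show ?thesis by simp
      next
        case False
        then have "hom_B F D2" using hom_B_card[OF fF fD2] unfolding y_def by simp
        then have "hom_B F D1" using supp F by simp
        then have "0 < x F" using hom_B_card[OF fF fD1] unfolding x_def by simp
        then have "int (x F) \<in> V" unfolding V_def using F by blast
        then have pz: "poly p (int (x F)) = 0" using proot by blast
        define Lf where "Lf = (\<Sum>a<Suc n. nat (- c a) * (x F ^ a * y F))"
        define Rf where "Rf = (\<Sum>a<Suc n. nat (c a) * (x F ^ a * y F))"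
        have "int Rf - int Lf
              = (\<Sum>a<Suc n. (int (nat (c a)) - int (nat (- c a))) * (int (x F) ^ a * int (y F)))"
          unfolding Lf_def Rf_def by (simp add: sum_subtractf left_diff_distrib)
        also have "\<dots> = (\<Sum>a<Suc n. c a * (int (x F) ^ a * int (y F)))"
        proof -
          have tm: "int (nat (c a)) - int (nat (- c a)) = c a" for a by linarith
          show ?thesis unfolding tm ..
        qed
        also have "\<dots> = (\<Sum>a<Suc n. c a * int (x F) ^ a) * int (y F)"
          unfolding sum_distrib_right mult.assoc ..
        also have "(\<Sum>a<Suc n. c a * int (x F) ^ a) = poly p (int (x F))"
          unfolding poly_altdef c_def n_def by (simp add: lessThan_Suc_atMost)
        finally have "int Rf - int Lf = poly p (int (x F)) * int (y F)" .
        then have "int Rf = int Lf" unfolding pz by simp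
        then show ?thesis unfolding Lf_def Rf_def by (rule of_nat_eq_iff[THEN iffD1, symmetric])
      qed
      then show ?thesis unfolding h1 h2 S1 S2 by simp
    qed
  qed
  have "map (\<lambda>F. hom_N F W1) Fs = map (\<lambda>F. hom_N F W2) Fs" using cnteq by simp
  then have eq3: "W1 \<in> C \<longleftrightarrow> W2 \<in> C"
    using alg IW1 IW2 unfolding left_query_alg_N_def by metis
  show ?thesis using eq1 eq2 eq3 by blast
qed

lemma key:
  fixes D1 D2 :: "('r, 'a) inst" and C :: "('r, 'a) inst set" and Fs :: "('r, 'a) inst list"
  assumes inf: "infinite (UNIV :: 'a set)" and sch: "schema S ar"
    and che: "closed_hom_equiv S ar C" and alg: "left_query_alg_N S ar C Fs X"
    and Fs: "\<forall>F\<in>set Fs. is_instance S ar F \<and> connected_inst F"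
    and D1: "is_instance S ar D1" and D2: "is_instance S ar D2"
    and supp: "\<forall>F\<in>set Fs. hom_B F D1 = hom_B F D2"
  shows "D1 \<in> C \<longleftrightarrow> D2 \<in> C"
proof -
  define Z where "Z = sumI [prodI [D1], prodI [D2]]"
  define Z' where "Z' = sumI [prodI [D2], prodI [D1]]"
  have IZ: "is_instance S ar Z" unfolding Z_def
    using D1 D2 by (intro inst_sumI) (auto intro!: inst_prodI[OF sch])
  obtain g :: "nat \<times> 'a list \<Rightarrow> 'a" where g: "inj_on g (adom Z)"
    using inj_into_infinite[OF inst_finite_adom[OF sch IZ] inf] by blast
  define W where "W = copyI g Z"
  have IW: "is_instance S ar W" unfolding W_def by (rule inst_copyI[OF IZ])
  have WZ: "hexG W Z" unfolding W_def by (rule hexG_copy_back[OF g])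
  have ZW: "hexG Z W" unfolding W_def by (rule hexG_copy)
  have ZZ': "hexG Z Z'" unfolding Z_def Z'_def by (intro hexG_sum ballI hexG_inj) auto
  have Z'Z: "hexG Z' Z" unfolding Z_def Z'_def by (intro hexG_sum ballI hexG_inj) auto
  have e1: "D1 \<in> C \<longleftrightarrow> W \<in> C"
    by (rule half[OF inf sch che alg Fs D1 D2 supp IW WZ[unfolded Z_def] ZW[unfolded Z_def]])
  have supp': "\<forall>F\<in>set Fs. hom_B F D2 = hom_B F D1" using supp by simp
  have e2: "D2 \<in> C \<longleftrightarrow> W \<in> C"
    by (rule half[OF inf sch che alg Fs D2 D1 supp' IW hexG_trans[OF WZ ZZ', unfolded Z'_def]
          hexG_trans[OF Z'Z ZW, unfolded Z'_def]])
  show ?thesis using e1 e2 by blast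
qed

theorem mainTheorem10:
  fixes S :: "'r set" and ar :: "'r \<Rightarrow> nat"
    and C :: "('r, 'a) inst set" and Fs :: "('r, 'a) inst list"
  assumes "infinite (UNIV :: 'a set)"
    and "schema S ar"
    and "is_class S ar C"
    and "closed_hom_equiv S ar C"
    and "distinct Fs"
    and "\<forall>F\<in>set Fs. is_instance S ar F \<and> connected_inst F"
  shows "(\<exists>X. left_query_alg_N S ar C Fs X) \<longleftrightarrow> (\<exists>X'. left_query_alg_B S ar C Fs X')"
proof
  assume "\<exists>X. left_query_alg_N S ar C Fs X"
  then obtain X where alg: "left_query_alg_N S ar C Fs X" by blast
  define X' where "X' = {v. \<exists>D\<in>C. is_instance S ar D \<and> v = map (\<lambda>F. hom_B F D) Fs}"
  have "left_query_alg_B S ar C Fs X'" unfolding left_query_alg_B_def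
  proof (intro allI impI)
    fix D :: "('r, 'a) inst" assume D: "is_instance S ar D"
    show "D \<in> C \<longleftrightarrow> map (\<lambda>F. hom_B F D) Fs \<in> X'"
    proof
      assume "D \<in> C" then show "map (\<lambda>F. hom_B F D) Fs \<in> X'" unfolding X'_def using D by blast
    next
      assume "map (\<lambda>F. hom_B F D) Fs \<in> X'"
      then obtain D' where D': "is_instance S ar D'" "D' \<in> C"
        and eq: "map (\<lambda>F. hom_B F D) Fs = map (\<lambda>F. hom_B F D') Fs" unfolding X'_def by auto
      have "\<forall>F\<in>set Fs. hom_B F D' = hom_B F D" using eq by simp
      then show "D \<in> C" using key[OF assms(1,2,4) alg assms(6) D'(1) D] D'(2) by blast
    qed
  qed
  then show "\<exists>X'. left_query_alg_B S ar C Fs X'" by blast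
next
  assume "\<exists>X'. left_query_alg_B S ar C Fs X'"
  then obtain X' where alg: "left_query_alg_B S ar C Fs X'" by blast
  define X where "X = {v. map (\<lambda>k::nat. 0 < k) v \<in> X'}"
  have "left_query_alg_N S ar C Fs X" unfolding left_query_alg_N_def
  proof (intro allI impI)
    fix D :: "('r, 'a) inst" assume D: "is_instance S ar D"
    have fD: "finite (adom D)" using inst_finite_adom[OF assms(2) D] .
    have "hom_B F D = (0 < hom_N F D)" if "F \<in> set Fs" for F
      using hom_B_card[OF inst_finite_adom[OF assms(2)] fD] assms(6) that unfolding hom_N_card by blast
    then have eq: "map (\<lambda>k. 0 < k) (map (\<lambda>F. hom_N F D) Fs) = map (\<lambda>F. hom_B F D) Fs" by simp
    have "map (\<lambda>F. hom_N F D) Fs \<in> X \<longleftrightarrow> map (\<lambda>F. hom_B F D) Fs \<in> X'"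
      unfolding X_def mem_Collect_eq eq ..
    then show "D \<in> C \<longleftrightarrow> map (\<lambda>F. hom_N F D) Fs \<in> X"
      using alg D unfolding left_query_alg_B_def by blast
  qed
  then show "\<exists>X. left_query_alg_N S ar C Fs X" by blast
qed

end
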